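(* Let $x_{m_1}<\dots<x_2<x_1<w<y_1<y_2<\dots<y_{m_2}$ be real numbers, and let $\mathfrak x_1,\dots,\mathfrak x_{m_1-1}$, $\mathfrak y_1,\dots,\mathfrak y_{m_2-1}$, $\mathfrak w$ be real numbers with $\mathfrak w\neq0$. For $\zeta\in\mathbb C$ with $\operatorname{Im}\zeta\ge0$ define $\mu_i=\operatorname{angle}(\zeta-x_{i+1},\zeta-x_i)$ ($1\le i\le m_1-1$), $\nu_i=\operatorname{angle}(\zeta-y_i,\zeta-y_{i+1})$ ($1\le i\le m_2-1$), and $\alpha=\operatorname{angle}(\zeta-x_1,\zeta-w)$. Then there exists $\varepsilon>0$ such that for all $\zeta$ with $\operatorname{Im}\zeta\ge0$ and $0<|\zeta-w|<\varepsilon$, $$\sum_{i=1}^{m_1-1}\mathfrak x_i\mu_i+\mathfrak w\alpha+\sum_{i=1}^{m_2-1}\mathfrak y_i\nu_i=0$$ holds if and only if $\zeta\in\mathbb R$ and $\zeta>w$. The same statement holds if $\alpha$ is replaced by $\tilde\alpha=\operatorname{angle}(\zeta-w,\zeta-y_1)$ and the condition $\zeta>w$ is replaced by $\zeta<w$.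
   Context: For nonzero complex numbers $u,v$, $\operatorname{angle}(u,v)$ denotes the angle from the vector $u$ to the vector $v$, i.e. $\arg(v/u)$; in all uses above (real points $a<b$ and $\operatorname{Im}\zeta\ge0$), $\operatorname{angle}(\zeta-a,\zeta-b)\in[0,\pi]$ is the angle at $\zeta$ subtended by the segment $[a,b]$. *)

theory Defs
  imports "HOL-Analysis.Analysis"
begin

definition angle :: "complex \<Rightarrow> complex \<Rightarrow> real" where
  "angle u v = Arg (v / u)"

end

theory Submission
  imports Defs
begin

lemma Arg_ReIm:
  assumes "z \<noteq> 0"
  shows "Re z = cmod z * cos (Arg z)" "Im z = cmod z * sin (Arg z)"
proof -
  have e: "z = of_real(norm z) * exp(\<i> * Arg z)" using Arg_eq[OF assms] .
  have "Re z = Re (of_real(norm z) * exp(\<i> * Arg z))" using e by simp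
  then show "Re z = cmod z * cos (Arg z)" by (simp add: Re_exp)
  have "Im z = Im (of_real(norm z) * exp(\<i> * Arg z))" using e by simp
  then show "Im z = cmod z * sin (Arg z)" by (simp add: Im_exp)
qed

lemma Arg_upper:
  assumes "Re z > 0" "Im z \<ge> 0"
  shows "Arg z \<le> Im z / Re z"
proof -
  have z: "z \<noteq> 0" using assms by auto
  have r: "\<bar>Arg z\<bar> < pi/2" using Arg_Re_pos assms by auto
  have c: "cos (Arg z) > 0" using r by (intro cos_gt_zero_pi) auto
  have n: "cmod z > 0" using z by simp
  have "Im z / Re z = tan (Arg z)" using Arg_ReIm[OF z] n c by (simp add: tan_def)
  then have "arctan (Im z / Re z) = Arg z" using r by (simp add: arctan_tan)
  moreover have "arctan (Im z / Re z) \<le> Im z / Re z" using assms by (intro arctan_le_self) simp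
  ultimately show ?thesis by simp
qed

lemma Arg_lower:
  assumes "z \<noteq> 0" "Im z \<ge> 0"
  shows "Im z / cmod z \<le> Arg z"
proof -
  have "Arg z \<ge> 0" using Arg_less_0 assms by auto
  then have "sin (Arg z) \<le> Arg z" by (rule sin_x_le_x)
  moreover have "Im z / cmod z = sin (Arg z)" using Arg_ReIm[OF assms(1)] assms(1) by simp
  ultimately show ?thesis by simp
qed

lemma quot_ReIm:
  fixes \<zeta> :: complex and a b :: real
  defines "z \<equiv> (\<zeta> - of_real b) / (\<zeta> - of_real a)"
  shows "Im z = (b - a) * Im \<zeta> / (cmod (\<zeta> - of_real a))^2"
    "Re z = ((Re \<zeta> - b) * (Re \<zeta> - a) + (Im \<zeta>)^2) / (cmod (\<zeta> - of_real a))^2"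
proof -
  have h: "(cmod (\<zeta> - of_real a))^2 = (Re \<zeta> - a)^2 + (Im \<zeta>)^2" by (simp add: cmod_power2)
  show "Im z = (b - a) * Im \<zeta> / (cmod (\<zeta> - of_real a))^2"
    unfolding z_def h by (simp add: Im_divide algebra_simps)
  show "Re z = ((Re \<zeta> - b) * (Re \<zeta> - a) + (Im \<zeta>)^2) / (cmod (\<zeta> - of_real a))^2"
    unfolding z_def h by (simp add: Re_divide algebra_simps power2_eq_square)
qed

lemma angle_upper:
  fixes \<zeta> :: complex
  assumes "a < b" "Im \<zeta> \<ge> 0" "d > 0" "Re \<zeta> \<ge> b + d \<or> Re \<zeta> \<le> a - d"
  shows "0 \<le> angle (\<zeta> - of_real a) (\<zeta> - of_real b) \<and>
         angle (\<zeta> - of_real a) (\<zeta> - of_real b) \<le> (b - a) / d^2 * Im \<zeta>"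
proof -
  define z where "z = (\<zeta> - of_real b) / (\<zeta> - of_real a)"
  have na: "\<zeta> - of_real a \<noteq> 0" using assms by (auto simp: complex_eq_iff)
  then have pa: "(cmod (\<zeta> - of_real a))^2 > 0" by simp
  have pr: "(Re \<zeta> - b) * (Re \<zeta> - a) \<ge> d * d"
  proof (cases "Re \<zeta> \<ge> b + d")
    case True
    then show ?thesis using assms by (intro mult_mono) auto
  next
    case False
    then have "Re \<zeta> \<le> a - d" using assms by auto
    then have "(b - Re \<zeta>) * (a - Re \<zeta>) \<ge> d * d" using assms by (intro mult_mono) auto
    then show ?thesis by (simp add: algebra_simps)
  qed
  have ImZ: "Im z \<ge> 0" unfolding z_def quot_ReIm using assms pa by simp
  have den: "(Re \<zeta> - b) * (Re \<zeta> - a) + (Im \<zeta>)^2 \<ge> d^2"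
    using pr by (simp add: power2_eq_square) (smt (verit) zero_le_square)
  have ReZ: "Re z > 0" unfolding z_def quot_ReIm using den pa assms(3)
    by (smt (verit, best) divide_pos_pos zero_less_power)
  have "Arg z \<le> Im z / Re z" using Arg_upper ReZ ImZ by blast
  also have "Im z / Re z = (b - a) * Im \<zeta> / ((Re \<zeta> - b) * (Re \<zeta> - a) + (Im \<zeta>)^2)"
    unfolding z_def quot_ReIm using pa by simp
  also have "\<dots> \<le> (b - a) * Im \<zeta> / d^2"
  proof -
    have d2: "d^2 > 0" using assms by simp
    then have p: "(Re \<zeta> - b) * (Re \<zeta> - a) + (Im \<zeta>)^2 > 0" using den by linarith
    show ?thesis using den assms d2 p by (intro divide_left_mono mult_pos_pos) auto
  qed
  finally have "Arg z \<le> (b - a) / d^2 * Im \<zeta>" by simp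
  moreover have "0 \<le> Arg z" using Arg_less_0 ImZ by blast
  ultimately show ?thesis unfolding angle_def z_def by simp
qed

lemma angle_lower:
  fixes \<zeta> :: complex
  assumes "a < b" "Im \<zeta> \<ge> 0" "\<zeta> \<noteq> of_real a" "\<zeta> \<noteq> of_real b"
  shows "(b - a) * Im \<zeta> / (cmod (\<zeta> - of_real a) * cmod (\<zeta> - of_real b))
           \<le> angle (\<zeta> - of_real a) (\<zeta> - of_real b)"
proof -
  define z where "z = (\<zeta> - of_real b) / (\<zeta> - of_real a)"
  have na: "cmod (\<zeta> - of_real a) > 0" "cmod (\<zeta> - of_real b) > 0" using assms by auto
  have z0: "z \<noteq> 0" unfolding z_def using assms by auto
  have ImZ: "Im z \<ge> 0" unfolding z_def quot_ReIm using assms na by simp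
  have "Im z / cmod z = (b - a) * Im \<zeta> / (cmod (\<zeta> - of_real a) * cmod (\<zeta> - of_real b))"
    unfolding z_def quot_ReIm using na by (simp add: norm_divide power2_eq_square field_simps)
  then show ?thesis using Arg_lower[OF z0 ImZ] unfolding angle_def z_def by simp
qed

lemma angle_real:
  assumes "t \<noteq> a" "a < b"
  shows "angle (of_real t - of_real a) (of_real t - of_real b) = (if a < t \<and> t < b then pi else 0)"
proof -
  have "(of_real t - of_real b) / (of_real t - of_real a) = (of_real ((t - b)/(t - a)) :: complex)"
    by simp
  moreover have "((t - b)/(t - a) < 0) = (a < t \<and> t < b)" using assms
    by (auto simp: divide_less_0_iff)
  ultimately show ?thesis unfolding angle_def by (simp only: Arg_of_real)
qed

lemma main_lemma:
  fixes S :: "complex \<Rightarrow> real"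
  assumes ab: "a < b" and w: "w = a \<or> w = b" and cw: "cw \<noteq> 0" and d: "d > 0" and M: "M \<ge> 0"
    and SB: "\<And>\<zeta>. Im \<zeta> \<ge> 0 \<Longrightarrow> cmod (\<zeta> - of_real w) < d \<Longrightarrow> \<bar>S \<zeta>\<bar> \<le> M * Im \<zeta>"
  shows "\<exists>\<epsilon>>0. \<epsilon> \<le> b - a \<and> (\<forall>\<zeta>. Im \<zeta> \<ge> 0 \<and> 0 < cmod (\<zeta> - of_real w) \<and> cmod (\<zeta> - of_real w) < \<epsilon> \<longrightarrow>
      (S \<zeta> + cw * angle (\<zeta> - of_real a) (\<zeta> - of_real b) = 0 \<longleftrightarrow>
        Im \<zeta> = 0 \<and> angle (\<zeta> - of_real a) (\<zeta> - of_real b) = 0))"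
proof -
  define K where "K = \<bar>cw\<bar> * (b - a) / ((b - a + 1) * (M + 1))"
  have K: "K > 0" unfolding K_def using ab cw M by (intro divide_pos_pos mult_pos_pos) auto
  define \<epsilon> where "\<epsilon> = min d (min (b - a) (min 1 K))"
  have e: "\<epsilon> > 0" "\<epsilon> \<le> d" "\<epsilon> \<le> b - a" "\<epsilon> \<le> 1" "\<epsilon> \<le> K" using K d ab by (auto simp: \<epsilon>_def)
  show ?thesis
  proof (intro exI[of _ \<epsilon>] conjI allI impI e(1) e(3))
    fix \<zeta> :: complex
    assume h: "Im \<zeta> \<ge> 0 \<and> 0 < cmod (\<zeta> - of_real w) \<and> cmod (\<zeta> - of_real w) < \<epsilon>"
    let ?f = "angle (\<zeta> - of_real a) (\<zeta> - of_real b)"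
    have Sb: "\<bar>S \<zeta>\<bar> \<le> M * Im \<zeta>" using SB h e by auto
    show "S \<zeta> + cw * ?f = 0 \<longleftrightarrow> Im \<zeta> = 0 \<and> ?f = 0"
    proof (cases "Im \<zeta> = 0")
      case True
      then have "S \<zeta> = 0" using Sb by simp
      then show ?thesis using True cw by simp
    next
      case False
      then have s: "Im \<zeta> > 0" using h by simp
      define q where "q = (if w = a then b else a)"
      have wo: "\<bar>w - q\<bar> = b - a" using w ab by (auto simp: q_def)
      have prod: "cmod (\<zeta> - of_real a) * cmod (\<zeta> - of_real b) = cmod (\<zeta> - of_real w) * cmod (\<zeta> - of_real q)"
        using w by (auto simp: q_def)
      have "cmod (\<zeta> - of_real q) \<le> cmod (\<zeta> - of_real w) + cmod (of_real w - of_real q :: complex)"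
        by (metis diff_add_cancel norm_triangle_ineq add.commute diff_diff_eq2)
      also have "cmod (of_real w - of_real q :: complex) = b - a" using wo
        by (metis norm_of_real of_real_diff)
      finally have co: "cmod (\<zeta> - of_real q) < 1 + (b - a)" using h e by linarith
      have na: "\<zeta> \<noteq> of_real a" "\<zeta> \<noteq> of_real b" using s by auto
      have P0: "cmod (\<zeta> - of_real a) * cmod (\<zeta> - of_real b) > 0" using na by simp
      have "cmod (\<zeta> - of_real w) * cmod (\<zeta> - of_real q) \<le> \<epsilon> * (1 + (b - a))"
        using h co e by (intro mult_mono) auto
      also have "\<dots> \<le> K * (1 + (b - a))" using e ab by (intro mult_right_mono) auto
      also have "\<dots> = \<bar>cw\<bar> * (b - a) / (M + 1)" proof -
        have n1: "b - a + 1 \<noteq> 0" "M + 1 \<noteq> 0" using ab M by auto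
        have aux: "\<And>c D N::real. D \<noteq> 0 \<Longrightarrow> N \<noteq> 0 \<Longrightarrow> c / (D * N) * D = c / N"
          by (simp add: field_simps)
        have "1 + (b - a) = b - a + 1" by simp
        then show ?thesis unfolding K_def using aux[OF n1] by metis
      qed
      finally have P1: "cmod (\<zeta> - of_real a) * cmod (\<zeta> - of_real b) \<le> \<bar>cw\<bar> * (b - a) / (M + 1)"
        using prod by simp
      have "(b - a) * Im \<zeta> / (\<bar>cw\<bar> * (b - a) / (M + 1)) \<le> (b - a) * Im \<zeta> / (cmod (\<zeta> - of_real a) * cmod (\<zeta> - of_real b))"
        using P0 P1 ab s M cw by (intro divide_left_mono mult_pos_pos divide_pos_pos) auto
      also have "\<dots> \<le> ?f" using angle_lower[OF ab _ na] s by simp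
      finally have f1: "(b - a) * Im \<zeta> / (\<bar>cw\<bar> * (b - a) / (M + 1)) \<le> ?f" .
      have aux2: "\<And>B C N s::real. B \<noteq> 0 \<Longrightarrow> C \<noteq> 0 \<Longrightarrow> N \<noteq> 0 \<Longrightarrow> B * s / (C * B / N) = N * s / C"
        by (simp add: field_simps)
      have "(b - a) * Im \<zeta> / (\<bar>cw\<bar> * (b - a) / (M + 1)) = (M + 1) * Im \<zeta> / \<bar>cw\<bar>"
        using ab cw M by (intro aux2) auto
      then have "(M + 1) * Im \<zeta> / \<bar>cw\<bar> \<le> ?f" using f1 by simp
      then have "(M + 1) * Im \<zeta> \<le> \<bar>cw\<bar> * ?f" using cw by (simp add: pos_divide_le_eq mult.commute)
      moreover have "\<bar>cw\<bar> * ?f \<le> \<bar>cw * ?f\<bar>" unfolding abs_mult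
        by (intro mult_left_mono) auto
      ultimately have "\<bar>cw * ?f\<bar> > \<bar>S \<zeta>\<bar>" using Sb s distrib_right[of M 1 "Im \<zeta>"] by linarith
      then show ?thesis using False by auto
    qed
  qed
qed

lemma dec_le:
  fixes x :: "nat \<Rightarrow> real"
  assumes "\<And>i. 1 \<le> i \<Longrightarrow> i < m \<Longrightarrow> x (i + 1) < x i"
  shows "1 \<le> i \<Longrightarrow> i \<le> m \<Longrightarrow> x i \<le> x 1"
proof (induction i)
  case 0 then show ?case by simp
next
  case (Suc n)
  show ?case
  proof (cases "n = 0")
    case True then show ?thesis by simp
  next
    case False
    then have "x (n + 1) < x n" using assms Suc.prems by auto
    moreover have "x n \<le> x 1" using Suc False by auto
    ultimately show ?thesis by simp
  qed
qed

lemma inc_ge: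
  fixes y :: "nat \<Rightarrow> real"
  assumes "\<And>i. 1 \<le> i \<Longrightarrow> i < m \<Longrightarrow> y i < y (i + 1)"
  shows "1 \<le> i \<Longrightarrow> i \<le> m \<Longrightarrow> y 1 \<le> y i"
  using dec_le[of m "\<lambda>i. - y i" i] assms by auto

lemma sum_bound:
  fixes g K :: "nat \<Rightarrow> real"
  assumes "\<And>i. i \<in> A \<Longrightarrow> \<bar>g i\<bar> \<le> K i * s"
  shows "\<bar>sum g A\<bar> \<le> sum K A * s"
proof -
  have "\<bar>sum g A\<bar> \<le> sum (\<lambda>i. \<bar>g i\<bar>) A" by (rule sum_abs)
  also have "\<dots> \<le> sum (\<lambda>i. K i * s) A" using assms by (intro sum_mono) auto
  also have "\<dots> = sum K A * s" by (simp add: sum_distrib_right)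
  finally show ?thesis .
qed

theorem lemma2p3:
  fixes x y :: "nat \<Rightarrow> real" and w :: real
    and cx cy :: "nat \<Rightarrow> real" and cw :: real
    and m1 m2 :: nat
  assumes m1: "m1 \<ge> 1" and m2: "m2 \<ge> 1"
    and x_dec: "\<And>i. 1 \<le> i \<Longrightarrow> i < m1 \<Longrightarrow> x (i + 1) < x i"
    and x1w: "x 1 < w" and wy1: "w < y 1"
    and y_inc: "\<And>i. 1 \<le> i \<Longrightarrow> i < m2 \<Longrightarrow> y i < y (i + 1)"
    and cw: "cw \<noteq> 0"
  shows
   "(\<exists>\<epsilon>>0. \<forall>\<zeta>::complex. Im \<zeta> \<ge> 0 \<and> 0 < cmod (\<zeta> - of_real w) \<and> cmod (\<zeta> - of_real w) < \<epsilon> \<longrightarrow>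
       ((\<Sum>i=1..m1-1. cx i * angle (\<zeta> - of_real (x (i+1))) (\<zeta> - of_real (x i)))
         + cw * angle (\<zeta> - of_real (x 1)) (\<zeta> - of_real w)
         + (\<Sum>i=1..m2-1. cy i * angle (\<zeta> - of_real (y i)) (\<zeta> - of_real (y (i+1)))) = 0
        \<longleftrightarrow> \<zeta> \<in> \<real> \<and> Re \<zeta> > w))
  \<and> (\<exists>\<epsilon>>0. \<forall>\<zeta>::complex. Im \<zeta> \<ge> 0 \<and> 0 < cmod (\<zeta> - of_real w) \<and> cmod (\<zeta> - of_real w) < \<epsilon> \<longrightarrow>
       ((\<Sum>i=1..m1-1. cx i * angle (\<zeta> - of_real (x (i+1))) (\<zeta> - of_real (x i)))
         + cw * angle (\<zeta> - of_real w) (\<zeta> - of_real (y 1))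
         + (\<Sum>i=1..m2-1. cy i * angle (\<zeta> - of_real (y i)) (\<zeta> - of_real (y (i+1)))) = 0
        \<longleftrightarrow> \<zeta> \<in> \<real> \<and> Re \<zeta> < w))"
proof -
  define d where "d = min (w - x 1) (y 1 - w) / 2"
  have d: "d > 0" "2 * d \<le> w - x 1" "2 * d \<le> y 1 - w" using x1w wy1 by (auto simp: d_def)
  define S1 where "S1 = (\<lambda>\<zeta>. \<Sum>i=1..m1-1. cx i * angle (\<zeta> - of_real (x (i+1))) (\<zeta> - of_real (x i)))"
  define S2 where "S2 = (\<lambda>\<zeta>. \<Sum>i=1..m2-1. cy i * angle (\<zeta> - of_real (y i)) (\<zeta> - of_real (y (i+1))))"
  define S where "S = (\<lambda>\<zeta>. S1 \<zeta> + S2 \<zeta>)"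
  define M1 where "M1 = (\<Sum>i=1..m1-1. \<bar>cx i\<bar> * ((x i - x (i+1)) / d^2))"
  define M2 where "M2 = (\<Sum>i=1..m2-1. \<bar>cy i\<bar> * ((y (i+1) - y i) / d^2))"
  have M1: "M1 \<ge> 0" unfolding M1_def using x_dec by (intro sum_nonneg mult_nonneg_nonneg) (auto simp: less_imp_le)
  have M2: "M2 \<ge> 0" unfolding M2_def using y_inc by (intro sum_nonneg mult_nonneg_nonneg) (auto simp: less_imp_le)
  have SB: "\<bar>S \<zeta>\<bar> \<le> (M1 + M2) * Im \<zeta>" if h: "Im \<zeta> \<ge> 0" "cmod (\<zeta> - of_real w) < d" for \<zeta>
  proof -
    have "\<bar>Re \<zeta> - w\<bar> < d" using abs_Re_le_cmod[of "\<zeta> - of_real w"] h by simp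
    then have re: "Re \<zeta> > x 1 + d" "Re \<zeta> < y 1 - d" using d by auto
    have b1: "\<bar>S1 \<zeta>\<bar> \<le> M1 * Im \<zeta>" unfolding S1_def M1_def
    proof (rule sum_bound)
      fix i assume i: "i \<in> {1..m1-1}"
      have xi: "x (i+1) < x i" "x i \<le> x 1" using i x_dec dec_le[of m1 x i, OF x_dec] by auto
      have "Re \<zeta> \<ge> x i + d" using xi re by linarith
      then have A: "0 \<le> angle (\<zeta> - of_real (x (i+1))) (\<zeta> - of_real (x i)) \<and>
          angle (\<zeta> - of_real (x (i+1))) (\<zeta> - of_real (x i)) \<le> (x i - x (i+1)) / d^2 * Im \<zeta>"
        using angle_upper[OF xi(1) h(1) d(1)] by blast
      show "\<bar>cx i * angle (\<zeta> - of_real (x (i+1))) (\<zeta> - of_real (x i))\<bar> \<le> \<bar>cx i\<bar> * ((x i - x (i+1)) / d^2) * Im \<zeta>"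
        using A unfolding abs_mult mult.assoc by (intro mult_left_mono) auto
    qed
    have b2: "\<bar>S2 \<zeta>\<bar> \<le> M2 * Im \<zeta>" unfolding S2_def M2_def
    proof (rule sum_bound)
      fix i assume i: "i \<in> {1..m2-1}"
      have yi: "y i < y (i+1)" "y 1 \<le> y i" using i y_inc inc_ge[of m2 y i, OF y_inc] by auto
      have "Re \<zeta> \<le> y i - d" using yi re by linarith
      then have A: "0 \<le> angle (\<zeta> - of_real (y i)) (\<zeta> - of_real (y (i+1))) \<and>
          angle (\<zeta> - of_real (y i)) (\<zeta> - of_real (y (i+1))) \<le> (y (i+1) - y i) / d^2 * Im \<zeta>"
        using angle_upper[OF yi(1) h(1) d(1)] by blast
      show "\<bar>cy i * angle (\<zeta> - of_real (y i)) (\<zeta> - of_real (y (i+1)))\<bar> \<le> \<bar>cy i\<bar> * ((y (i+1) - y i) / d^2) * Im \<zeta>"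
        using A unfolding abs_mult mult.assoc by (intro mult_left_mono) auto
    qed
    show ?thesis unfolding S_def using b1 b2 by (simp add: distrib_right)
  qed
  have P1: "\<exists>\<epsilon>>0. \<forall>\<zeta>::complex. Im \<zeta> \<ge> 0 \<and> 0 < cmod (\<zeta> - of_real w) \<and> cmod (\<zeta> - of_real w) < \<epsilon> \<longrightarrow>
       (S1 \<zeta> + cw * angle (\<zeta> - of_real (x 1)) (\<zeta> - of_real w) + S2 \<zeta> = 0
        \<longleftrightarrow> \<zeta> \<in> \<real> \<and> Re \<zeta> > w)"
  proof -
    obtain \<epsilon> where e: "\<epsilon> > 0" "\<epsilon> \<le> w - x 1" and E: "\<And>\<zeta>. Im \<zeta> \<ge> 0 \<and> 0 < cmod (\<zeta> - of_real w) \<and> cmod (\<zeta> - of_real w) < \<epsilon> \<Longrightarrow>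
      (S \<zeta> + cw * angle (\<zeta> - of_real (x 1)) (\<zeta> - of_real w) = 0 \<longleftrightarrow>
        Im \<zeta> = 0 \<and> angle (\<zeta> - of_real (x 1)) (\<zeta> - of_real w) = 0)"
      using main_lemma[OF x1w _ cw d(1), of w "M1 + M2" S] M1 M2 SB by auto
    show ?thesis
    proof (intro exI[of _ \<epsilon>] conjI allI impI e(1))
      fix \<zeta> :: complex
      assume h: "Im \<zeta> \<ge> 0 \<and> 0 < cmod (\<zeta> - of_real w) \<and> cmod (\<zeta> - of_real w) < \<epsilon>"
      have eq: "S1 \<zeta> + cw * angle (\<zeta> - of_real (x 1)) (\<zeta> - of_real w) + S2 \<zeta>
          = S \<zeta> + cw * angle (\<zeta> - of_real (x 1)) (\<zeta> - of_real w)" by (simp add: S_def)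
      have "(Im \<zeta> = 0 \<and> angle (\<zeta> - of_real (x 1)) (\<zeta> - of_real w) = 0) \<longleftrightarrow> \<zeta> \<in> \<real> \<and> Re \<zeta> > w"
      proof (cases "Im \<zeta> = 0")
        case True
        define t where "t = Re \<zeta>"
        have z: "\<zeta> = of_real t" using True by (simp add: t_def complex_eq_iff)
        have "\<bar>t - w\<bar> < \<epsilon>" "t \<noteq> w" using h z by (auto simp flip: of_real_diff)
        then have t: "t \<noteq> x 1" "t > x 1" "t \<noteq> w" using e by auto
        have "angle (\<zeta> - of_real (x 1)) (\<zeta> - of_real w) = (if x 1 < t \<and> t < w then pi else 0)"
          unfolding z by (rule angle_real[OF t(1) x1w])
        then show ?thesis using True t by (auto simp: complex_is_Real_iff t_def)
      next
        case False
        then show ?thesis by (auto simp: complex_is_Real_iff)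
      qed
      then show "(S1 \<zeta> + cw * angle (\<zeta> - of_real (x 1)) (\<zeta> - of_real w) + S2 \<zeta> = 0) = (\<zeta> \<in> \<real> \<and> w < Re \<zeta>)"
        unfolding eq using E[OF h] by simp
    qed
  qed
  have P2: "\<exists>\<epsilon>>0. \<forall>\<zeta>::complex. Im \<zeta> \<ge> 0 \<and> 0 < cmod (\<zeta> - of_real w) \<and> cmod (\<zeta> - of_real w) < \<epsilon> \<longrightarrow>
       (S1 \<zeta> + cw * angle (\<zeta> - of_real w) (\<zeta> - of_real (y 1)) + S2 \<zeta> = 0
        \<longleftrightarrow> \<zeta> \<in> \<real> \<and> Re \<zeta> < w)"
  proof -
    obtain \<epsilon> where e: "\<epsilon> > 0" "\<epsilon> \<le> y 1 - w" and E: "\<And>\<zeta>. Im \<zeta> \<ge> 0 \<and> 0 < cmod (\<zeta> - of_real w) \<and> cmod (\<zeta> - of_real w) < \<epsilon> \<Longrightarrow>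
      (S \<zeta> + cw * angle (\<zeta> - of_real w) (\<zeta> - of_real (y 1)) = 0 \<longleftrightarrow>
        Im \<zeta> = 0 \<and> angle (\<zeta> - of_real w) (\<zeta> - of_real (y 1)) = 0)"
      using main_lemma[OF wy1 _ cw d(1), of w "M1 + M2" S] M1 M2 SB by auto
    show ?thesis
    proof (intro exI[of _ \<epsilon>] conjI allI impI e(1))
      fix \<zeta> :: complex
      assume h: "Im \<zeta> \<ge> 0 \<and> 0 < cmod (\<zeta> - of_real w) \<and> cmod (\<zeta> - of_real w) < \<epsilon>"
      have eq: "S1 \<zeta> + cw * angle (\<zeta> - of_real w) (\<zeta> - of_real (y 1)) + S2 \<zeta>
          = S \<zeta> + cw * angle (\<zeta> - of_real w) (\<zeta> - of_real (y 1))" by (simp add: S_def)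
      have "(Im \<zeta> = 0 \<and> angle (\<zeta> - of_real w) (\<zeta> - of_real (y 1)) = 0) \<longleftrightarrow> \<zeta> \<in> \<real> \<and> Re \<zeta> < w"
      proof (cases "Im \<zeta> = 0")
        case True
        define t where "t = Re \<zeta>"
        have z: "\<zeta> = of_real t" using True by (simp add: t_def complex_eq_iff)
        have "\<bar>t - w\<bar> < \<epsilon>" "t \<noteq> w" using h z by (auto simp flip: of_real_diff)
        then have t: "t \<noteq> w" "t < y 1" using e by auto
        have "angle (\<zeta> - of_real w) (\<zeta> - of_real (y 1)) = (if w < t \<and> t < y 1 then pi else 0)"
          unfolding z by (rule angle_real[OF t(1) wy1])
        then show ?thesis using True t by (auto simp: complex_is_Real_iff t_def)
      next
        case False
        then show ?thesis by (auto simp: complex_is_Real_iff)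
      qed
      then show "(S1 \<zeta> + cw * angle (\<zeta> - of_real w) (\<zeta> - of_real (y 1)) + S2 \<zeta> = 0) = (\<zeta> \<in> \<real> \<and> Re \<zeta> < w)"
        unfolding eq using E[OF h] by simp
    qed
  qed
  show ?thesis using P1 P2 unfolding S1_def S2_def by simp
qed

end
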